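(* For any finite alphabet $\mathfrak{G}$ and any $\mathfrak{G}$-trees $\mathfrak{s}$ and $\mathfrak{t}$ such that $\mathfrak{s}\preceq\mathfrak{t}$, in the $\mathfrak{G}$-prefix poset, $\#[\mathfrak{s},\mathfrak{t}] = \mathrm{ld}(\mathrm{sh}(\lozenge_{|\mathfrak{s}|}[\mathfrak{t}\setminus\mathfrak{s}]))$.
   Context: $\mathfrak{G}$ is a finite alphabet (letters with arities $\geq 1$). A $\mathfrak{G}$-tree is either the leaf (the tree with no internal node) or a root decorated by a letter $\mathtt{a}\in\mathfrak{G}$ with $|\mathtt{a}|$ children that are $\mathfrak{G}$-trees; $|\mathfrak{s}|$ is the number of leaves. The $\mathfrak{G}$-prefix poset is the set of $\mathfrak{G}$-trees ordered by $\mathfrak{s}\preceq\mathfrak{t}$ iff $\mathfrak{t}$ is obtained by grafting $\mathfrak{G}$-trees $\mathfrak{r}_1,\dots,\mathfrak{r}_{|\mathfrak{s}|}$ onto the leaves of $\mathfrak{s}$ (left to right); then $\mathfrak{t}\setminus\mathfrak{s} := (\mathfrak{r}_1,\dots,\mathfrak{r}_{|\mathfrak{s}|})$. $\lozenge_k[\mathfrak{r}_1,\dots,\mathfrak{r}_k]$ is the tree with root decorated by a new letter $\lozenge_k$ of arity $k$ and children $\mathfrak{r}_1,\dots,\mathfrak{r}_k$. A shadow is a finite (possibly empty) multiset of shadows. For a tree $\mathfrak{t}$ different from the leaf with root of arity $k$, $\mathrm{sh}(\mathfrak{t})$ is the multiset of the $\mathrm{sh}(\mathfrak{t}(i))$ over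 those $i\in[k]$ such that the $i$-th subtree $\mathfrak{t}(i)$ is not the leaf. The load of a shadow is defined recursively by $\mathrm{ld}(\{s_1,\dots,s_k\}) = \prod_{i\in[k]}(1+\mathrm{ld}(s_i))$ (so the empty shadow has load $1$). *)

theory Defs
  imports "HOL-Library.Multiset"
begin

datatype 'a gtree = Leaf | Node 'a "'a gtree list"

fun is_gtree :: "'a set \<Rightarrow> ('a \<Rightarrow> nat) \<Rightarrow> 'a gtree \<Rightarrow> bool" where
  "is_gtree G ar Leaf = True"
| "is_gtree G ar (Node a ts) =
     (a \<in> G \<and> length ts = ar a \<and> (\<forall>t\<in>set ts. is_gtree G ar t))"

fun nleaves :: "'a gtree \<Rightarrow> nat" where
  "nleaves Leaf = 1"
| "nleaves (Node a ts) = sum_list (map nleaves ts)"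

fun graft :: "'a gtree \<Rightarrow> 'a gtree list \<Rightarrow> 'a gtree"
and graft_list :: "'a gtree list \<Rightarrow> 'a gtree list \<Rightarrow> 'a gtree list" where
  "graft Leaf rs = hd rs"
| "graft (Node a ss) rs = Node a (graft_list ss rs)"
| "graft_list [] rs = []"
| "graft_list (s # ss) rs =
     graft s (take (nleaves s) rs) # graft_list ss (drop (nleaves s) rs)"

definition prefix_le :: "'a set \<Rightarrow> ('a \<Rightarrow> nat) \<Rightarrow> 'a gtree \<Rightarrow> 'a gtree \<Rightarrow> bool" where
  "prefix_le G ar s t \<longleftrightarrow> is_gtree G ar s \<and> is_gtree G ar t \<and>
     (\<exists>rs. length rs = nleaves s \<and> (\<forall>r\<in>set rs. is_gtree G ar r) \<and> t = graft s rs)"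

definition tree_diff :: "'a gtree \<Rightarrow> 'a gtree \<Rightarrow> 'a gtree list" where
  "tree_diff t s = (THE rs. length rs = nleaves s \<and> graft s rs = t)"

definition prefix_interval :: "'a set \<Rightarrow> ('a \<Rightarrow> nat) \<Rightarrow> 'a gtree \<Rightarrow> 'a gtree \<Rightarrow> 'a gtree set" where
  "prefix_interval G ar s t = {u. prefix_le G ar s u \<and> prefix_le G ar u t}"

text \<open>Diamond_k[r_1,...,r_k]: root decorated by a new letter (None), the old letters embedded via Some.\<close>
definition diamond :: "'a gtree list \<Rightarrow> 'a option gtree" where
  "diamond rs = Node None (map (map_gtree Some) rs)"

datatype shadow = Sh "shadow multiset"

fun sh :: "'a gtree \<Rightarrow> shadow" where
  "sh Leaf = Sh {#}"  (* not used: the shadow is only defined for non-leaf trees *)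
| "sh (Node a ts) = Sh (mset (map sh (filter (\<lambda>t. t \<noteq> Leaf) ts)))"

primrec ld :: "shadow \<Rightarrow> nat" where
  "ld (Sh M) = prod_mset (image_mset (\<lambda>s. 1 + ld s) M)"

end

theory Submission
  imports Defs
begin

inductive pre :: "'a gtree \<Rightarrow> 'a gtree \<Rightarrow> bool" where
  preL: "pre Leaf r"
| preN: "list_all2 pre us rs \<Longrightarrow> pre (Node a us) (Node a rs)"
monos list_all2_mono

lemma pre_NodeL: "pre (Node a ss) u \<longleftrightarrow> (\<exists>us. u = Node a us \<and> list_all2 pre ss us)"
  by (auto elim: pre.cases intro: preN)

lemma pre_NodeR: "pre u (Node a ts) \<longleftrightarrow> u = Leaf \<or> (\<exists>us. u = Node a us \<and> list_all2 pre us ts)"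
  by (auto elim: pre.cases intro: preN preL)

lemma pre_LeafR: "pre u Leaf \<longleftrightarrow> u = Leaf"
  by (auto elim: pre.cases intro: preL)

lemma pre_graft:
  "pre u (graft u vs)" and "list_all2 pre ss (graft_list ss vs)"
  by (induction u vs and ss vs rule: graft_graft_list.induct) (auto intro: preL preN)

lemma pre_gtree: "pre u r \<Longrightarrow> is_gtree G ar r \<Longrightarrow> is_gtree G ar u"
proof (induction rule: pre.induct)
  case (preL r)
  then show ?case by simp
next
  case (preN us rs a)
  have len: "length us = length rs" using preN.IH by (rule list_all2_lengthD)
  have "\<forall>u\<in>set us. is_gtree G ar u"
  proof
    fix u assume "u \<in> set us"
    then obtain i where i: "i < length us" "u = us ! i" by (auto simp: in_set_conv_nth)
    have "pre (us!i) (rs!i) \<and> (is_gtree G ar (rs!i) \<longrightarrow> is_gtree G ar (us!i))"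
      using preN.IH i by (auto simp: list_all2_conv_all_nth)
    moreover have "is_gtree G ar (rs!i)" using preN.prems i len by auto
    ultimately show "is_gtree G ar u" using i by simp
  qed
  then show ?case using preN.prems len by simp
qed

lemma pre_decomp:
  "pre u r \<Longrightarrow> is_gtree G ar r \<Longrightarrow>
     \<exists>vs. length vs = nleaves u \<and> (\<forall>v\<in>set vs. is_gtree G ar v) \<and> r = graft u vs"
proof (induction rule: pre.induct)
  case (preL r)
  then show ?case by (intro exI[of _ "[r]"]) simp
next
  case (preN us rs a)
  have "(\<forall>r\<in>set rs. is_gtree G ar r) \<Longrightarrow>
     \<exists>vs. length vs = sum_list (map nleaves us) \<and> (\<forall>v\<in>set vs. is_gtree G ar v) \<and> rs = graft_list us vs"
    using preN.IH
  proof (induction rule: list_all2_induct)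
    case Nil
    then show ?case by simp
  next
    case (Cons u us r rs)
    then obtain v1 where v1: "length v1 = nleaves u" "\<forall>v\<in>set v1. is_gtree G ar v" "r = graft u v1" by auto
    from Cons obtain v2 where v2: "length v2 = sum_list (map nleaves us)" "\<forall>v\<in>set v2. is_gtree G ar v" "rs = graft_list us v2" by auto
    show ?case using v1 v2 by (intro exI[of _ "v1 @ v2"]) auto
  qed
  then show ?case using preN.prems by auto
qed

lemma graft_inj:
  "length vs = nleaves s \<Longrightarrow> length ws = nleaves s \<Longrightarrow> graft s vs = graft s ws \<Longrightarrow> vs = ws"
  and "length vs = sum_list (map nleaves ss) \<Longrightarrow> length ws = sum_list (map nleaves ss) \<Longrightarrow>
       graft_list ss vs = graft_list ss ws \<Longrightarrow> vs = ws"
proof (induction s vs and ss vs arbitrary: ws and ws rule: graft_graft_list.induct)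
  case (1 rs)
  then show ?case by (cases rs; cases ws) auto
next
  case (2 a ss rs)
  then show ?case by simp
next
  case (3 rs)
  then show ?case by simp
next
  case (4 s ss rs)
  have "take (nleaves s) rs = take (nleaves s) ws"
    using 4 by (intro "4.IH"(1)) auto
  moreover have "drop (nleaves s) rs = drop (nleaves s) ws"
    using 4 by (intro "4.IH"(2)) auto
  ultimately show ?case by (metis append_take_drop_id)
qed

lemma card_lists:
  "(\<forall>t\<in>set ts. finite {u. R u t}) \<Longrightarrow>
    finite {us. list_all2 R us ts} \<and> card {us. list_all2 R us ts} = prod_list (map (\<lambda>t. card {u. R u t}) ts)"
proof (induction ts)
  case Nil
  then show ?case by simp
next
  case (Cons t ts)
  have eq: "{us. list_all2 R us (t#ts)} = (\<lambda>(u,us). u#us) ` ({u. R u t} \<times> {us. list_all2 R us ts})"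
    by (auto simp: list_all2_Cons2)
  have inj: "inj_on (\<lambda>(u,us). u#us) ({u. R u t} \<times> {us. list_all2 R us ts})"
    by (auto simp: inj_on_def)
  show ?case using Cons unfolding eq by (simp add: card_image[OF inj] card_cartesian_product)
qed

definition Pf :: "'a gtree \<Rightarrow> nat" where
  "Pf r = (if r = Leaf then 1 else 1 + ld (sh r))"

lemma ld_mset: "ld (Sh (mset xs)) = prod_list (map (\<lambda>s. 1 + ld s) xs)"
  by (simp add: prod_mset_prod_list[symmetric])

lemma filter_prod: "prod_list (map (\<lambda>t. 1 + ld (sh t)) (filter (\<lambda>t. t \<noteq> Leaf) xs)) = prod_list (map Pf xs)"
  by (induction xs) (auto simp: Pf_def)

lemma ld_sh_Node: "ld (sh (Node a ts)) = prod_list (map Pf ts)"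
  by (simp only: sh.simps ld_mset map_map comp_def filter_prod)

lemma Pf_Node: "Pf (Node a ts) = 1 + prod_list (map Pf ts)"
  by (simp only: Pf_def ld_sh_Node gtree.distinct if_False)

lemma card_pre: "finite {u. pre u r} \<and> card {u. pre u r} = Pf r"
proof (induction r)
  case Leaf
  then show ?case by (simp add: pre_LeafR Pf_def)
next
  case (Node a ts)
  have eq: "{u. pre u (Node a ts)} = insert Leaf (Node a ` {us. list_all2 pre us ts})"
    by (auto simp: pre_NodeR)
  have "card {us. list_all2 pre us ts} = prod_list (map (\<lambda>t. card {u. pre u t}) ts)"
    using card_lists[of ts pre] Node by simp
  also have "map (\<lambda>t. card {u. pre u t}) ts = map Pf ts"
    using Node.IH by (auto simp: map_eq_conv)
  finally have c: "card {us. list_all2 pre us ts} = prod_list (map Pf ts)" .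
  have f: "finite {us. list_all2 pre us ts}" using card_lists[of ts pre] Node by simp
  have ci: "card (Node a ` {us. list_all2 pre us ts}) = card {us. list_all2 pre us ts}"
    by (rule card_image) (auto simp: inj_on_def)
  have "Leaf \<notin> Node a ` {us. list_all2 pre us ts}" by auto
  then show ?case unfolding eq using f ci c by (simp add: Pf_Node)
qed

lemma count_main:
  "length vs = nleaves s \<Longrightarrow>
   finite {u. pre s u \<and> pre u (graft s vs)} \<and> card {u. pre s u \<and> pre u (graft s vs)} = prod_list (map Pf vs)"
proof (induction s arbitrary: vs)
  case Leaf
  then obtain v where "vs = [v]" by (cases vs) auto
  then show ?case using card_pre[of v] by (simp add: preL)
next
  case (Node a ss)
  have inner: "\<And>vs. length vs = sum_list (map nleaves ss) \<Longrightarrow>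
     finite {us. list_all2 pre ss us \<and> list_all2 pre us (graft_list ss vs)} \<and>
     card {us. list_all2 pre ss us \<and> list_all2 pre us (graft_list ss vs)} = prod_list (map Pf vs)"
    using Node.IH
  proof (induction ss)
    case Nil
    then show ?case by simp
  next
    case (Cons s ss)
    define n where "n = nleaves s"
    define A where "A = {u. pre s u \<and> pre u (graft s (take n vs))}"
    define B where "B = {us. list_all2 pre ss us \<and> list_all2 pre us (graft_list ss (drop n vs))}"
    have eq: "{us. list_all2 pre (s#ss) us \<and> list_all2 pre us (graft_list (s#ss) vs)} =
       (\<lambda>(u,us). u#us) ` (A \<times> B)"
      by (auto simp: A_def B_def n_def list_all2_Cons1)
    have inj: "inj_on (\<lambda>(u,us). u#us) (A \<times> B)"
      by (auto simp: inj_on_def)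
    have hA: "finite A \<and> card A = prod_list (map Pf (take n vs))"
      unfolding A_def using Cons.prems by (intro Cons.prems(2)) (auto simp: n_def)
    have hB: "finite B \<and> card B = prod_list (map Pf (drop n vs))"
      unfolding B_def using Cons.prems by (intro Cons.IH) (auto simp: n_def)
    have "prod_list (map Pf vs) = prod_list (map Pf (take n vs)) * prod_list (map Pf (drop n vs))"
      by (metis append_take_drop_id map_append prod_list.append)
    then show ?case unfolding eq using hA hB
      by (simp add: card_image[OF inj] card_cartesian_product)
  qed
  have eq: "{u. pre (Node a ss) u \<and> pre u (graft (Node a ss) vs)} =
      Node a ` {us. list_all2 pre ss us \<and> list_all2 pre us (graft_list ss vs)}"
    by (auto simp: pre_NodeL pre_NodeR)
  show ?case unfolding eq using inner[of vs] Node.prems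
    by (simp add: card_image inj_on_def)
qed

lemma map_Leaf: "map_gtree f r = Leaf \<longleftrightarrow> r = Leaf"
  by (cases r) auto

lemma sh_map: "sh (map_gtree f r) = sh r"
proof (induction r)
  case Leaf
  then show ?case by simp
next
  case (Node a ts)
  have "filter (\<lambda>t. t \<noteq> Leaf) (map (map_gtree f) ts) = map (map_gtree f) (filter (\<lambda>t. t \<noteq> Leaf) ts)"
    by (induction ts) (auto simp: map_Leaf)
  then show ?case using Node by (auto simp: comp_def intro!: image_mset_cong)
qed

lemma diamond_ld: "ld (sh (diamond vs)) = prod_list (map Pf vs)"
proof -
  have "ld (sh (diamond vs)) = prod_list (map Pf (map (map_gtree Some) vs))"
    unfolding diamond_def by (rule ld_sh_Node)
  also have "\<dots> = prod_list (map Pf vs)"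
  proof -
    have "map (Pf \<circ> map_gtree Some) vs = map Pf vs"
      by (auto simp: map_eq_conv Pf_def sh_map map_Leaf)
    then show ?thesis by (simp only: map_map)
  qed
  finally show ?thesis .
qed

theorem proposition3p12:
  fixes G :: "'a set" and ar :: "'a \<Rightarrow> nat" and s t :: "'a gtree"
  assumes "finite G"
    and "\<forall>a\<in>G. ar a \<ge> 1"
    and "prefix_le G ar s t"
  shows "card (prefix_interval G ar s t) = ld (sh (diamond (tree_diff t s)))"
proof -
  from assms(3) obtain vs where gs: "is_gtree G ar s" and gt: "is_gtree G ar t"
    and vs: "length vs = nleaves s" "t = graft s vs"
    unfolding prefix_le_def by blast
  have td: "tree_diff t s = vs"
    unfolding tree_diff_def
    using vs graft_inj(1)[of _ s vs] by (intro the_equality) auto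
  have pl: "prefix_le G ar u r \<longleftrightarrow> is_gtree G ar u \<and> is_gtree G ar r \<and> pre u r" for u r
    unfolding prefix_le_def using pre_graft(1) pre_decomp by metis
  have "prefix_interval G ar s t = {u. pre s u \<and> pre u (graft s vs)}"
    unfolding prefix_interval_def pl using gs gt vs pre_gtree by blast
  then show ?thesis using count_main[OF vs(1)] td by (simp add: diamond_ld)
qed

end
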